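(* A posheaf $F$ on a locale $X$ is complete if and only if its opposite posheaf $F^{op}$ is complete.
   Context: Let $X$ be a locale with frame of opens $\mathcal{O}(X)$. A posheaf on $X$ is a sheaf of sets $F$ with (POS1) each $F(u)$ a poset; (POS2) restriction maps $F(u)\to F(v)$, $x\mapsto x|_v$ ($v\le u$), order-preserving; (POS3) if $u=\bigvee_i u_i$ and $s,t\in F(u)$ satisfy $s|_{u_i}\le t|_{u_i}$ for all $i$, then $s\le t$. $F^{op}$ has the same underlying sheaf with $F^{op}(u)=F(u)^{op}$. A point of $F$ is a morphism $p:\hat1\to F$ with $\hat1$ a subsheaf of the terminal sheaf, identified with an element of $F(\mathrm{dom}(p))$ where $\mathrm{dom}(p)$ is the largest open $u$ with $\hat1(u)\ne\emptyset$; points are ordered by $p_1\le p_2$ iff $\mathrm{dom}(p_1)\le\mathrm{dom}(p_2)$ and $p_1\le p_2|_{\mathrm{dom}(p_1)}$. For $u\in\mathcal{O}(X)$, $F^u$ is the restriction of $F$ to $\downarrow u$. A downsheaf is a subsheaf $G$ with each $G(v)$ a down-set of $F(v)$; $\mathbb{D}F(u)$ is the set of downsheaves of $F^u$, ordered by inclusion, with restriction to smaller opens; $\downarrow:F\to\mathbb{D}F$ sends $z\in F(u)$ to the downsheaf $v\mapsto\{y\in F(v)\mid y\le z|_v\}$ ($v\le u$). For order-preserving $\alpha,\beta$, $\alpha\dashv\beta$ means $\alpha x\le y\iff x\le\beta y$ for all points. $F$ is complete if $\downarrow:F\to\mathbb{D}F$ has a left adjoint. *)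

theory Defs
  imports Main
begin

text \<open>The frame of opens O(X) of a locale X is modelled as a complete lattice
type 'u satisfying the frame distributive law.  A sheaf of sets F on X is given
by its carriers F u :: 'x set, and restriction maps res u v (for v \<le> u).\<close>

definition frame :: "'u::complete_lattice itself \<Rightarrow> bool" where
  "frame _ \<longleftrightarrow> (\<forall>(a::'u) S. inf a (Sup S) = Sup ((\<lambda>s. inf a s) ` S))"

definition sheaf :: "('u::complete_lattice \<Rightarrow> 'x set) \<Rightarrow> ('u \<Rightarrow> 'u \<Rightarrow> 'x \<Rightarrow> 'x) \<Rightarrow> bool" where
  "sheaf F res \<longleftrightarrow>
     (\<forall>u v x. v \<le> u \<longrightarrow> x \<in> F u \<longrightarrow> res u v x \<in> F v) \<and>
     (\<forall>u x. x \<in> F u \<longrightarrow> res u u x = x) \<and>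
     (\<forall>u v w x. w \<le> v \<longrightarrow> v \<le> u \<longrightarrow> x \<in> F u \<longrightarrow> res v w (res u v x) = res u w x) \<and>
     (\<forall>U s. (\<forall>v\<in>U. s v \<in> F v) \<longrightarrow>
        (\<forall>v\<in>U. \<forall>w\<in>U. res v (inf v w) (s v) = res w (inf v w) (s w)) \<longrightarrow>
        (\<exists>!x. x \<in> F (Sup U) \<and> (\<forall>v\<in>U. res (Sup U) v x = s v)))"

definition posheaf :: "('u::complete_lattice \<Rightarrow> 'x set) \<Rightarrow> ('u \<Rightarrow> 'u \<Rightarrow> 'x \<Rightarrow> 'x)
     \<Rightarrow> ('u \<Rightarrow> 'x \<Rightarrow> 'x \<Rightarrow> bool) \<Rightarrow> bool" where
  "posheaf F res le \<longleftrightarrow> sheaf F res \<and>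
     \<comment> \<open>POS1: each F(u) is a poset\<close>
     (\<forall>u. \<forall>x\<in>F u. le u x x) \<and>
     (\<forall>u. \<forall>x\<in>F u. \<forall>y\<in>F u. le u x y \<longrightarrow> le u y x \<longrightarrow> x = y) \<and>
     (\<forall>u. \<forall>x\<in>F u. \<forall>y\<in>F u. \<forall>z\<in>F u. le u x y \<longrightarrow> le u y z \<longrightarrow> le u x z) \<and>
     \<comment> \<open>POS2: restrictions are order preserving\<close>
     (\<forall>u v. v \<le> u \<longrightarrow> (\<forall>x\<in>F u. \<forall>y\<in>F u. le u x y \<longrightarrow> le v (res u v x) (res u v y))) \<and>
     \<comment> \<open>POS3\<close>
     (\<forall>U. \<forall>s\<in>F (Sup U). \<forall>t\<in>F (Sup U).
        (\<forall>v\<in>U. le v (res (Sup U) v s) (res (Sup U) v t)) \<longrightarrow> le (Sup U) s t)"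

definition opp :: "('u \<Rightarrow> 'x \<Rightarrow> 'x \<Rightarrow> bool) \<Rightarrow> ('u \<Rightarrow> 'x \<Rightarrow> 'x \<Rightarrow> bool)" where
  "opp le = (\<lambda>u x y. le u y x)"

text \<open>DF(u): downsheaves of F^u, i.e. subsheaves G of F restricted to the down-set of u
with each G(v) a down-set of F(v).  They are represented as functions on all opens,
vanishing outside the down-set of u.\<close>

definition downsheaves :: "('u::complete_lattice \<Rightarrow> 'x set) \<Rightarrow> ('u \<Rightarrow> 'u \<Rightarrow> 'x \<Rightarrow> 'x)
     \<Rightarrow> ('u \<Rightarrow> 'x \<Rightarrow> 'x \<Rightarrow> bool) \<Rightarrow> 'u \<Rightarrow> ('u \<Rightarrow> 'x set) set" where
  "downsheaves F res le u = {G.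
     (\<forall>v. \<not> v \<le> u \<longrightarrow> G v = {}) \<and>
     (\<forall>v. v \<le> u \<longrightarrow> G v \<subseteq> F v) \<and>
     (\<forall>v. v \<le> u \<longrightarrow> (\<forall>x\<in>G v. \<forall>y\<in>F v. le v y x \<longrightarrow> y \<in> G v)) \<and>
     (\<forall>v w. w \<le> v \<longrightarrow> v \<le> u \<longrightarrow> (\<forall>x\<in>G v. res v w x \<in> G w)) \<and>
     (\<forall>V. Sup V \<le> u \<longrightarrow> (\<forall>x\<in>F (Sup V). (\<forall>w\<in>V. res (Sup V) w x \<in> G w) \<longrightarrow> x \<in> G (Sup V)))}"

definition resD :: "'u::complete_lattice \<Rightarrow> 'u \<Rightarrow> ('u \<Rightarrow> 'x set) \<Rightarrow> ('u \<Rightarrow> 'x set)" where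
  "resD u v G = (\<lambda>w. if w \<le> v then G w else {})"

definition down :: "('u::complete_lattice \<Rightarrow> 'x set) \<Rightarrow> ('u \<Rightarrow> 'u \<Rightarrow> 'x \<Rightarrow> 'x)
     \<Rightarrow> ('u \<Rightarrow> 'x \<Rightarrow> 'x \<Rightarrow> bool) \<Rightarrow> 'u \<Rightarrow> 'x \<Rightarrow> ('u \<Rightarrow> 'x set)" where
  "down F res le u z = (\<lambda>v. if v \<le> u then {y \<in> F v. le v y (res u v z)} else {})"

definition posheaf_mor_DF :: "('u::complete_lattice \<Rightarrow> 'x set) \<Rightarrow> ('u \<Rightarrow> 'u \<Rightarrow> 'x \<Rightarrow> 'x)
     \<Rightarrow> ('u \<Rightarrow> 'x \<Rightarrow> 'x \<Rightarrow> bool) \<Rightarrow> ('u \<Rightarrow> ('u \<Rightarrow> 'x set) \<Rightarrow> 'x) \<Rightarrow> bool" where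
  "posheaf_mor_DF F res le \<alpha> \<longleftrightarrow>
     (\<forall>u. \<forall>G\<in>downsheaves F res le u. \<alpha> u G \<in> F u) \<and>
     (\<forall>u v. v \<le> u \<longrightarrow> (\<forall>G\<in>downsheaves F res le u. \<alpha> v (resD u v G) = res u v (\<alpha> u G))) \<and>
     (\<forall>u. \<forall>G\<in>downsheaves F res le u. \<forall>H\<in>downsheaves F res le u.
         G \<le> H \<longrightarrow> le u (\<alpha> u G) (\<alpha> u H))"

text \<open>Points of F are pairs (d, y) with y \<in> F d; points of DF are pairs (d, G) with
G \<in> DF(d).  alpha is left adjoint to down iff for all such points
alpha(d,G) \<le> (d',y) \<longleftrightarrow> (d,G) \<le> down(d',y), using the order on points.\<close>
definition complete :: "('u::complete_lattice \<Rightarrow> 'x set) \<Rightarrow> ('u \<Rightarrow> 'u \<Rightarrow> 'x \<Rightarrow> 'x)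
     \<Rightarrow> ('u \<Rightarrow> 'x \<Rightarrow> 'x \<Rightarrow> bool) \<Rightarrow> bool" where
  "complete F res le \<longleftrightarrow> (\<exists>\<alpha>. posheaf_mor_DF F res le \<alpha> \<and>
     (\<forall>d d' G y. G \<in> downsheaves F res le d \<longrightarrow> y \<in> F d' \<longrightarrow>
        ((d \<le> d' \<and> le d (\<alpha> d G) (res d' d y)) \<longleftrightarrow>
         (d \<le> d' \<and> G \<le> resD d' d (down F res le d' y)))))"

end

theory Submission
  imports Defs
begin

definition lowb where
  "lowb F res le d U = (\<lambda>w. if w \<le> d then {x \<in> F w. \<forall>w'\<le>w. \<forall>u\<in>U w'. le w' (res w w' x) u} else {})"

lemma ps_parts:
  assumes "posheaf F res le"
  shows "sheaf F res" and "\<forall>u. \<forall>x\<in>F u. le u x x"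
    and "\<forall>u. \<forall>x\<in>F u. \<forall>y\<in>F u. le u x y \<longrightarrow> le u y x \<longrightarrow> x = y"
    and "\<forall>u. \<forall>x\<in>F u. \<forall>y\<in>F u. \<forall>z\<in>F u. le u x y \<longrightarrow> le u y z \<longrightarrow> le u x z"
    and "\<forall>u v. v \<le> u \<longrightarrow> (\<forall>x\<in>F u. \<forall>y\<in>F u. le u x y \<longrightarrow> le v (res u v x) (res u v y))"
    and "\<forall>U. \<forall>s\<in>F (Sup U). \<forall>t\<in>F (Sup U).
        (\<forall>v\<in>U. le v (res (Sup U) v s) (res (Sup U) v t)) \<longrightarrow> le (Sup U) s t"
proof -
  note h = assms[unfolded posheaf_def]
  show "sheaf F res" by (rule conjunct1[OF h])
  show "\<forall>u. \<forall>x\<in>F u. le u x x" by (rule conjunct1[OF conjunct2[OF h]])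
  show "\<forall>u. \<forall>x\<in>F u. \<forall>y\<in>F u. le u x y \<longrightarrow> le u y x \<longrightarrow> x = y"
    by (rule conjunct1[OF conjunct2[OF conjunct2[OF h]]])
  show "\<forall>u. \<forall>x\<in>F u. \<forall>y\<in>F u. \<forall>z\<in>F u. le u x y \<longrightarrow> le u y z \<longrightarrow> le u x z"
    by (rule conjunct1[OF conjunct2[OF conjunct2[OF conjunct2[OF h]]]])
  show "\<forall>u v. v \<le> u \<longrightarrow> (\<forall>x\<in>F u. \<forall>y\<in>F u. le u x y \<longrightarrow> le v (res u v x) (res u v y))"
    by (rule conjunct1[OF conjunct2[OF conjunct2[OF conjunct2[OF conjunct2[OF h]]]]])
  show "\<forall>U. \<forall>s\<in>F (Sup U). \<forall>t\<in>F (Sup U).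
        (\<forall>v\<in>U. le v (res (Sup U) v s) (res (Sup U) v t)) \<longrightarrow> le (Sup U) s t"
    by (rule conjunct2[OF conjunct2[OF conjunct2[OF conjunct2[OF conjunct2[OF h]]]]])
qed

lemma sh_parts:
  assumes "sheaf F res"
  shows "\<forall>u v x. v \<le> u \<longrightarrow> x \<in> F u \<longrightarrow> res u v x \<in> F v"
    and "\<forall>u x. x \<in> F u \<longrightarrow> res u u x = x"
    and "\<forall>u v w x. w \<le> v \<longrightarrow> v \<le> u \<longrightarrow> x \<in> F u \<longrightarrow> res v w (res u v x) = res u w x"
proof -
  note h = assms[unfolded sheaf_def]
  show "\<forall>u v x. v \<le> u \<longrightarrow> x \<in> F u \<longrightarrow> res u v x \<in> F v" by (rule conjunct1[OF h])
  show "\<forall>u x. x \<in> F u \<longrightarrow> res u u x = x" by (rule conjunct1[OF conjunct2[OF h]])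
  show "\<forall>u v w x. w \<le> v \<longrightarrow> v \<le> u \<longrightarrow> x \<in> F u \<longrightarrow> res v w (res u v x) = res u w x"
    by (rule conjunct1[OF conjunct2[OF conjunct2[OF h]]])
qed

lemma ps:
  assumes "posheaf F res le"
  shows ps_res: "\<And>u v x. v \<le> u \<Longrightarrow> x \<in> F u \<Longrightarrow> res u v x \<in> F v"
    and ps_id: "\<And>u x. x \<in> F u \<Longrightarrow> res u u x = x"
    and ps_comp: "\<And>u v w x. w \<le> v \<Longrightarrow> v \<le> u \<Longrightarrow> x \<in> F u \<Longrightarrow> res v w (res u v x) = res u w x"
    and ps_refl: "\<And>u x. x \<in> F u \<Longrightarrow> le u x x"
    and ps_antisym: "\<And>u x y. x \<in> F u \<Longrightarrow> y \<in> F u \<Longrightarrow> le u x y \<Longrightarrow> le u y x \<Longrightarrow> x = y"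
    and ps_trans: "\<And>u x y z. x \<in> F u \<Longrightarrow> y \<in> F u \<Longrightarrow> z \<in> F u \<Longrightarrow> le u x y \<Longrightarrow> le u y z \<Longrightarrow> le u x z"
    and ps_mono: "\<And>u v x y. v \<le> u \<Longrightarrow> x \<in> F u \<Longrightarrow> y \<in> F u \<Longrightarrow> le u x y \<Longrightarrow> le v (res u v x) (res u v y)"
    and ps_glue: "\<And>U s t. s \<in> F (Sup U) \<Longrightarrow> t \<in> F (Sup U) \<Longrightarrow>
        (\<forall>v\<in>U. le v (res (Sup U) v s) (res (Sup U) v t)) \<Longrightarrow> le (Sup U) s t"
proof -
  note a = sh_parts[OF ps_parts(1)[OF assms]] and b = ps_parts(2-6)[OF assms]
  show "\<And>u v x. v \<le> u \<Longrightarrow> x \<in> F u \<Longrightarrow> res u v x \<in> F v" using a(1) by blast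
  show "\<And>u x. x \<in> F u \<Longrightarrow> res u u x = x" using a(2) by blast
  show "\<And>u v w x. w \<le> v \<Longrightarrow> v \<le> u \<Longrightarrow> x \<in> F u \<Longrightarrow> res v w (res u v x) = res u w x" using a(3) by blast
  show "\<And>u x. x \<in> F u \<Longrightarrow> le u x x" using b(1) by blast
  show "\<And>u x y. x \<in> F u \<Longrightarrow> y \<in> F u \<Longrightarrow> le u x y \<Longrightarrow> le u y x \<Longrightarrow> x = y" using b(2) by blast
  show "\<And>u x y z. x \<in> F u \<Longrightarrow> y \<in> F u \<Longrightarrow> z \<in> F u \<Longrightarrow> le u x y \<Longrightarrow> le u y z \<Longrightarrow> le u x z" using b(3) by blast
  show "\<And>u v x y. v \<le> u \<Longrightarrow> x \<in> F u \<Longrightarrow> y \<in> F u \<Longrightarrow> le u x y \<Longrightarrow> le v (res u v x) (res u v y)" using b(4) by blast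
  show "\<And>U s t. s \<in> F (Sup U) \<Longrightarrow> t \<in> F (Sup U) \<Longrightarrow>
        (\<forall>v\<in>U. le v (res (Sup U) v s) (res (Sup U) v t)) \<Longrightarrow> le (Sup U) s t" using b(5) by blast
qed

lemma posheaf_opp:
  assumes "posheaf F res le" shows "posheaf F res (opp le)"
proof -
  note p = ps_parts[OF assms]
  have "\<forall>u. \<forall>x\<in>F u. \<forall>y\<in>F u. \<forall>z\<in>F u. le u y x \<longrightarrow> le u z y \<longrightarrow> le u z x"
    using p(4) by blast
  moreover have "\<forall>u. \<forall>x\<in>F u. \<forall>y\<in>F u. le u y x \<longrightarrow> le u x y \<longrightarrow> x = y"
    using p(3) by blast
  moreover have "\<forall>u v. v \<le> u \<longrightarrow> (\<forall>x\<in>F u. \<forall>y\<in>F u. le u y x \<longrightarrow> le v (res u v y) (res u v x))"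
    using p(5) by blast
  moreover have "\<forall>U. \<forall>s\<in>F (Sup U). \<forall>t\<in>F (Sup U).
        (\<forall>v\<in>U. le v (res (Sup U) v t) (res (Sup U) v s)) \<longrightarrow> le (Sup U) t s"
    using p(6) by blast
  ultimately show ?thesis unfolding posheaf_def opp_def using p(1,2) by (intro conjI)
qed

lemma opp_opp: "opp (opp le) = le" unfolding opp_def by simp

lemma glue_frame:
  assumes fr: "frame TYPE('u::complete_lattice)" and P: "posheaf F res le"
    and s: "s \<in> F (w'::'u)" and t: "t \<in> F w'" and w': "w' \<le> Sup V"
    and H: "\<And>w. w \<in> V \<Longrightarrow> le (inf w' w) (res w' (inf w' w) s) (res w' (inf w' w) t)"
  shows "le w' s t"
proof -
  have eq: "Sup ((\<lambda>w. inf w' w) ` V) = w'"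
  proof -
    have "inf w' (Sup V) = Sup ((\<lambda>s. inf w' s) ` V)"
      using fr unfolding frame_def by blast
    moreover have "inf w' (Sup V) = w'" using w' by (simp add: inf_absorb1)
    ultimately show ?thesis by simp
  qed
  have "le (Sup ((\<lambda>w. inf w' w) ` V)) s t"
    apply (rule ps_glue[OF P])
    using s t H eq by auto
  thus ?thesis using eq by simp
qed

lemma resD_down:
  assumes G: "G \<in> downsheaves F res le d" and wd: "w \<le> d"
  shows "resD d w G \<in> downsheaves F res le w"
proof -
  note G' = G[unfolded downsheaves_def mem_Collect_eq]
  have G2: "\<forall>v. v \<le> d \<longrightarrow> G v \<subseteq> F v" using conjunct1[OF conjunct2[OF G']] .
  have G3: "\<forall>v. v \<le> d \<longrightarrow> (\<forall>x\<in>G v. \<forall>y\<in>F v. le v y x \<longrightarrow> y \<in> G v)"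
    using conjunct1[OF conjunct2[OF conjunct2[OF G']]] .
  have G4: "\<forall>v w. w \<le> v \<longrightarrow> v \<le> d \<longrightarrow> (\<forall>x\<in>G v. res v w x \<in> G w)"
    using conjunct1[OF conjunct2[OF conjunct2[OF conjunct2[OF G']]]] .
  have G5: "\<forall>V. Sup V \<le> d \<longrightarrow> (\<forall>x\<in>F (Sup V). (\<forall>w\<in>V. res (Sup V) w x \<in> G w) \<longrightarrow> x \<in> G (Sup V))"
    using conjunct2[OF conjunct2[OF conjunct2[OF conjunct2[OF G']]]] .
  let ?R = "resD d w G"
  have R: "\<And>v. ?R v = (if v \<le> w then G v else {})" by (simp add: resD_def)
  have A: "\<forall>v. \<not> v \<le> w \<longrightarrow> ?R v = {}" using R by simp
  have B: "\<forall>v. v \<le> w \<longrightarrow> ?R v \<subseteq> F v"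
  proof (intro allI impI)
    fix v assume vw: "v \<le> w"
    have "v \<le> d" using vw wd by (rule order_trans)
    thus "?R v \<subseteq> F v" using R vw G2 by simp
  qed
  have C: "\<forall>v. v \<le> w \<longrightarrow> (\<forall>x\<in>?R v. \<forall>y\<in>F v. le v y x \<longrightarrow> y \<in> ?R v)"
  proof (intro allI impI ballI)
    fix v x y assume "v \<le> w" "x \<in> ?R v" "y \<in> F v" "le v y x"
    hence vd: "v \<le> d" using wd by (blast intro: order_trans)
    have "x \<in> G v" using \<open>x \<in> ?R v\<close> \<open>v \<le> w\<close> R by simp
    hence "y \<in> G v" using G3 vd \<open>y \<in> F v\<close> \<open>le v y x\<close> by blast
    thus "y \<in> ?R v" using R \<open>v \<le> w\<close> by simp
  qed
  have D: "\<forall>v u. u \<le> v \<longrightarrow> v \<le> w \<longrightarrow> (\<forall>x\<in>?R v. res v u x \<in> ?R u)"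
  proof (intro allI impI ballI)
    fix v u x assume uv: "u \<le> v" and vw: "v \<le> w" and x: "x \<in> ?R v"
    have "x \<in> G v" using x vw R by simp
    moreover have vd: "v \<le> d" using vw wd by (rule order_trans)
    ultimately have "res v u x \<in> G u" using G4 uv by blast
    moreover have "u \<le> w" using uv vw by (rule order_trans)
    ultimately show "res v u x \<in> ?R u" using R by simp
  qed
  have E: "\<forall>V. Sup V \<le> w \<longrightarrow> (\<forall>x\<in>F (Sup V). (\<forall>u\<in>V. res (Sup V) u x \<in> ?R u) \<longrightarrow> x \<in> ?R (Sup V))"
  proof (intro allI impI ballI)
    fix V x assume Vw: "Sup V \<le> w" and xF: "x \<in> F (Sup V)" and H: "\<forall>u\<in>V. res (Sup V) u x \<in> ?R u"
    have "\<forall>u\<in>V. res (Sup V) u x \<in> G u"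
    proof
      fix u assume "u \<in> V"
      hence "u \<le> w" using order_trans[OF Sup_upper Vw] by blast
      thus "res (Sup V) u x \<in> G u" using bspec[OF H \<open>u \<in> V\<close>] by (simp add: resD_def)
    qed
    moreover have "Sup V \<le> d" using Vw wd by (rule order_trans)
    ultimately have "x \<in> G (Sup V)" using G5 xF by blast
    thus "x \<in> ?R (Sup V)" using R Vw by simp
  qed
  show ?thesis unfolding downsheaves_def mem_Collect_eq using A B C D E by (intro conjI)
qed

lemma lowb_down:
  assumes fr: "frame TYPE('u::complete_lattice)" and P: "posheaf F res le"
    and U: "U \<in> downsheaves F res (opp le) (d::'u)"
  shows "lowb F res le d U \<in> downsheaves F res le d"
proof -
  have UU1: "(\<forall>v w. w \<le> v \<longrightarrow> v \<le> d \<longrightarrow> (\<forall>x\<in>U v. res v w x \<in> U w))"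
    using conjunct1[OF conjunct2[OF conjunct2[OF conjunct2[OF U[unfolded downsheaves_def mem_Collect_eq]]]]] .
  have UU2: "(\<forall>v. v \<le> d \<longrightarrow> U v \<subseteq> F v)"
    using conjunct1[OF conjunct2[OF U[unfolded downsheaves_def mem_Collect_eq]]] .
  have Ures: "\<And>v w x. w \<le> v \<Longrightarrow> v \<le> d \<Longrightarrow> x \<in> U v \<Longrightarrow> res v w x \<in> U w"
    using UU1 by blast
  have UF: "\<And>v x. v \<le> d \<Longrightarrow> x \<in> U v \<Longrightarrow> x \<in> F v"
    using UU2 by blast
  let ?L = "lowb F res le d U"
  have A: "\<forall>v. \<not> v \<le> d \<longrightarrow> ?L v = {}" by (simp add: lowb_def)
  have B: "\<forall>v. v \<le> d \<longrightarrow> ?L v \<subseteq> F v" by (auto simp: lowb_def)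
  have C: "\<forall>v. v \<le> d \<longrightarrow> (\<forall>x\<in>?L v. \<forall>y\<in>F v. le v y x \<longrightarrow> y \<in> ?L v)"
  proof (intro allI impI ballI)
    fix v x y assume vd: "v \<le> d" and x: "x \<in> ?L v" and y: "y \<in> F v" and yx: "le v y x"
    have xF: "x \<in> F v" and xl: "\<And>w' u. w' \<le> v \<Longrightarrow> u \<in> U w' \<Longrightarrow> le w' (res v w' x) u"
      using x vd by (auto simp: lowb_def)
    show "y \<in> ?L v"
    proof -
      have "le w' (res v w' y) u" if "w' \<le> v" "u \<in> U w'" for w' u
      proof -
        have uF: "u \<in> F w'" using UF that vd order_trans by blast
        show ?thesis
          apply (rule ps_trans[OF P _ _ uF ps_mono[OF P that(1) y xF yx] xl[OF that]])
          using ps_res[OF P] that xF y by auto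
      qed
      thus ?thesis using vd y by (simp add: lowb_def)
    qed
  qed
  have D: "\<forall>v w. w \<le> v \<longrightarrow> v \<le> d \<longrightarrow> (\<forall>x\<in>?L v. res v w x \<in> ?L w)"
  proof (intro allI impI ballI)
    fix v w x assume wv: "w \<le> v" and vd: "v \<le> d" and x: "x \<in> ?L v"
    have xF: "x \<in> F v" and xl: "\<And>w' u. w' \<le> v \<Longrightarrow> u \<in> U w' \<Longrightarrow> le w' (res v w' x) u"
      using x vd by (auto simp: lowb_def)
    have "le w' (res w w' (res v w x)) u" if "w' \<le> w" "u \<in> U w'" for w' u
      using xl[of w' u] that wv ps_comp[OF P that(1) wv xF] order_trans by metis
    moreover have "res v w x \<in> F w" using ps_res[OF P wv xF] .
    ultimately show "res v w x \<in> ?L w" using wv vd order_trans by (auto simp: lowb_def)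
  qed
  have E: "\<forall>V. Sup V \<le> d \<longrightarrow> (\<forall>x\<in>F (Sup V). (\<forall>w\<in>V. res (Sup V) w x \<in> ?L w) \<longrightarrow> x \<in> ?L (Sup V))"
  proof (intro allI impI ballI)
    fix V x assume Vd: "Sup V \<le> d" and xF: "x \<in> F (Sup V)" and H: "\<forall>w\<in>V. res (Sup V) w x \<in> ?L w"
    have "le w' (res (Sup V) w' x) u" if w': "w' \<le> Sup V" and u: "u \<in> U w'" for w' u
    proof -
      have w'd: "w' \<le> d" using w' Vd by auto
      have uF: "u \<in> F w'" using UF w'd u by blast
      show ?thesis
      proof (rule glue_frame[OF fr P ps_res[OF P w' xF] uF])
        show "w' \<le> Sup V" by fact
      next
        fix w assume wV: "w \<in> V"
        have wS: "w \<le> Sup V" using wV by (simp add: Sup_upper)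
        have hw: "res (Sup V) w x \<in> ?L w" using H wV by blast
        have wd: "w \<le> d" using wS Vd by auto
        have xl: "\<And>w'' u. w'' \<le> w \<Longrightarrow> u \<in> U w'' \<Longrightarrow> le w'' (res w w'' (res (Sup V) w x)) u"
          using hw wd by (auto simp: lowb_def)
        have i1: "inf w' w \<le> w" and i2: "inf w' w \<le> w'" by auto
        have uR: "res w' (inf w' w) u \<in> U (inf w' w)" using Ures[OF i2 w'd u] .
        have "le (inf w' w) (res w (inf w' w) (res (Sup V) w x)) (res w' (inf w' w) u)"
          using xl[OF i1 uR] .
        moreover have "res w (inf w' w) (res (Sup V) w x) = res (Sup V) (inf w' w) x"
          using ps_comp[OF P i1 wS xF] .
        moreover have "res w' (inf w' w) (res (Sup V) w' x) = res (Sup V) (inf w' w) x"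
          using ps_comp[OF P i2 w' xF] .
        ultimately show "le (inf w' w) (res w' (inf w' w) (res (Sup V) w' x)) (res w' (inf w' w) u)"
          by simp
      qed
    qed
    thus "x \<in> ?L (Sup V)" using xF Vd by (simp add: lowb_def)
  qed
  show ?thesis unfolding downsheaves_def mem_Collect_eq using A B C D E by (intro conjI)
qed


lemma lowb_resD:
  assumes "v \<le> u"
  shows "lowb F res le v (resD u v U) = resD u v (lowb F res le u U)"
proof
  fix w show "lowb F res le v (resD u v U) w = resD u v (lowb F res le u U) w"
  proof (cases "w \<le> v")
    case False thus ?thesis by (simp add: lowb_def resD_def)
  next
    case True
    have wu: "w \<le> u" using True assms by (rule order_trans)
    have eq: "\<And>w'. w' \<le> w \<Longrightarrow> resD u v U w' = U w'"
      using True unfolding resD_def by (metis order_trans)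
    have "lowb F res le v (resD u v U) w = {x \<in> F w. \<forall>w'\<le>w. \<forall>y\<in>U w'. le w' (res w w' x) y}"
      unfolding lowb_def using True eq by simp
    moreover have "resD u v (lowb F res le u U) w = {x \<in> F w. \<forall>w'\<le>w. \<forall>y\<in>U w'. le w' (res w w' x) y}"
      unfolding lowb_def resD_def using True wu by simp
    ultimately show ?thesis by simp
  qed
qed

lemma lowb_anti:
  assumes "G \<le> H" shows "lowb F res le d H \<le> lowb F res le d G"
proof (rule le_funI)
  fix w
  have "\<And>w'. H w' \<supseteq> G w'" using assms by (simp add: le_fun_def)
  hence "\<forall>w'\<le>w. \<forall>u\<in>H w'. le w' (res w w' x) u \<Longrightarrow> \<forall>w'\<le>w. \<forall>u\<in>G w'. le w' (res w w' x) u" for x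
    by blast
  thus "lowb F res le d H w \<le> lowb F res le d G w" unfolding lowb_def by auto
qed

lemma allE4: "(\<forall>a b c d. P a b c d \<longrightarrow> Q a b c d \<longrightarrow> R a b c d) \<Longrightarrow> P a b c d \<Longrightarrow> Q a b c d \<Longrightarrow> R a b c d"
  by blast
lemma ballE2: "(\<forall>u. \<forall>G\<in>S u. P u G) \<Longrightarrow> G \<in> S u \<Longrightarrow> P u G" by blast
lemma ballE3: "(\<forall>u v. v \<le> u \<longrightarrow> (\<forall>G\<in>S u. P u v G)) \<Longrightarrow> v \<le> u \<Longrightarrow> G \<in> S u \<Longrightarrow> P u v G" by blast
lemma ballE4: "(\<forall>u. \<forall>G\<in>S u. \<forall>H\<in>S u. G \<le> H \<longrightarrow> P u G H) \<Longrightarrow> G \<in> S u \<Longrightarrow> H \<in> S u \<Longrightarrow> G \<le> H \<Longrightarrow> P u G H" by blast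

lemma main:
  fixes F :: "'u::complete_lattice \<Rightarrow> 'x set"
  assumes fr: "frame TYPE('u::complete_lattice)" and P: "posheaf F res le"
    and C: "complete F res le"
  shows "complete F res (opp le)"
proof -
  from C[unfolded complete_def] obtain \<alpha> where MA: "posheaf_mor_DF F res le \<alpha> \<and>
     (\<forall>d d' G y. G \<in> downsheaves F res le d \<longrightarrow> y \<in> F d' \<longrightarrow>
        ((d \<le> d' \<and> le d (\<alpha> d G) (res d' d y)) \<longleftrightarrow>
         (d \<le> d' \<and> G \<le> resD d' d (down F res le d' y))))" by (rule exE)
  have M: "posheaf_mor_DF F res le \<alpha>" using conjunct1[OF MA] .
  have A: "\<And>d d' G y. G \<in> downsheaves F res le (d::'u) \<Longrightarrow> y \<in> F d' \<Longrightarrow>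
        ((d \<le> d' \<and> le d (\<alpha> d G) (res d' d y)) \<longleftrightarrow>
         (d \<le> d' \<and> G \<le> resD d' d (down F res le d' y)))"
    using conjunct2[OF MA] by (rule allE4)
  note M' = M[unfolded posheaf_mor_DF_def]
  have MF: "\<And>u G. G \<in> downsheaves F res le u \<Longrightarrow> \<alpha> u G \<in> F u"
    using conjunct1[OF M'] by (rule ballE2)
  have MN: "\<And>u v G. v \<le> u \<Longrightarrow> G \<in> downsheaves F res le u \<Longrightarrow> \<alpha> v (resD u v G) = res u v (\<alpha> u G)"
    using conjunct1[OF conjunct2[OF M']] by (rule ballE3)
  have MM: "\<And>u G H. G \<in> downsheaves F res le u \<Longrightarrow> H \<in> downsheaves F res le u \<Longrightarrow> G \<le> H \<Longrightarrow> le u (\<alpha> u G) (\<alpha> u H)"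
    using conjunct2[OF conjunct2[OF M']] by (rule ballE4)
  have UB: "\<And>d G x. G \<in> downsheaves F res le d \<Longrightarrow> x \<in> G d \<Longrightarrow> le d x (\<alpha> d G)"
  proof -
    fix d G x assume G: "G \<in> downsheaves F res le d" and x: "x \<in> G d"
    have aF: "\<alpha> d G \<in> F d" using MF[OF G] .
    have "le d (\<alpha> d G) (res d d (\<alpha> d G))" using ps_id[OF P aF] ps_refl[OF P aF] by simp
    hence "G \<le> resD d d (down F res le d (\<alpha> d G))" using A[OF G aF] by blast
    hence "x \<in> resD d d (down F res le d (\<alpha> d G)) d" using x unfolding le_fun_def by blast
    thus "le d x (\<alpha> d G)" using ps_id[OF P aF] by (simp add: resD_def down_def)
  qed
  define \<beta> where "\<beta> = (\<lambda>u U. \<alpha> u (lowb F res le u U))"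
  have LD: "\<And>u U. U \<in> downsheaves F res (opp le) u \<Longrightarrow> lowb F res le u U \<in> downsheaves F res le u"
    using lowb_down[OF fr P] by blast
  have Mop: "posheaf_mor_DF F res (opp le) \<beta>"
    unfolding posheaf_mor_DF_def
  proof (intro conjI allI impI ballI)
    fix u U assume "U \<in> downsheaves F res (opp le) u"
    thus "\<beta> u U \<in> F u" unfolding \<beta>_def using MF LD by blast
  next
    fix u v U assume vu: "v \<le> u" and U: "U \<in> downsheaves F res (opp le) u"
    show "\<beta> v (resD u v U) = res u v (\<beta> u U)"
      unfolding \<beta>_def lowb_resD[OF vu] using MN[OF vu LD[OF U]] .
  next
    fix u G H assume G: "G \<in> downsheaves F res (opp le) u" and H: "H \<in> downsheaves F res (opp le) u"
      and GH: "G \<le> H"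
    show "opp le u (\<beta> u G) (\<beta> u H)"
      unfolding \<beta>_def opp_def using MM[OF LD[OF H] LD[OF G] lowb_anti[OF GH]] .
  qed
  have Aop: "((d \<le> d' \<and> opp le d (\<beta> d U) (res d' d y)) \<longleftrightarrow>
         (d \<le> d' \<and> U \<le> resD d' d (down F res (opp le) d' y)))"
    if U: "U \<in> downsheaves F res (opp le) d" and y: "y \<in> F d'" for d d' U y
  proof (cases "d \<le> d'")
    case False thus ?thesis by simp
  next
    case dd: True
    let ?L = "lowb F res le d U"
    have L: "?L \<in> downsheaves F res le d" using LD[OF U] .
    have aF: "\<alpha> d ?L \<in> F d" using MF[OF L] .
    have UU1: "(\<forall>v w. w \<le> v \<longrightarrow> v \<le> d \<longrightarrow> (\<forall>x\<in>U v. res v w x \<in> U w))"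
      using conjunct1[OF conjunct2[OF conjunct2[OF conjunct2[OF U[unfolded downsheaves_def mem_Collect_eq]]]]] .
    have UU0: "(\<forall>v. \<not> v \<le> d \<longrightarrow> U v = {})"
      using conjunct1[OF U[unfolded downsheaves_def mem_Collect_eq]] .
    have UU2: "(\<forall>v. v \<le> d \<longrightarrow> U v \<subseteq> F v)"
      using conjunct1[OF conjunct2[OF U[unfolded downsheaves_def mem_Collect_eq]]] .
    have zF: "res d' d y \<in> F d" using ps_res[OF P dd y] .
    have "le d (res d' d y) (\<alpha> d ?L) \<longleftrightarrow> U \<le> resD d' d (down F res (opp le) d' y)"
    proof
      assume z: "le d (res d' d y) (\<alpha> d ?L)"
      show "U \<le> resD d' d (down F res (opp le) d' y)"
        unfolding le_fun_def
      proof
        fix w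
        show "U w \<subseteq> resD d' d (down F res (opp le) d' y) w"
        proof (cases "w \<le> d")
          case False thus ?thesis using UU0 by simp
        next
          case wd: True
          show ?thesis
          proof
            fix u assume u: "u \<in> U w"
            have uF: "u \<in> F w" using UU2 wd u by blast
            have RL: "resD d w ?L \<in> downsheaves F res le w" using resD_down[OF L wd] .
            have "resD d w ?L \<le> resD w w (down F res le w u)"
              unfolding le_fun_def
            proof
              fix v show "resD d w ?L v \<subseteq> resD w w (down F res le w u) v"
              proof
                fix x assume x: "x \<in> resD d w ?L v"
                hence vw: "v \<le> w" and xL: "x \<in> ?L v" by (auto simp: resD_def split: if_splits)
                have vd: "v \<le> d" using vw wd by auto
                have xF: "x \<in> F v" and xl: "\<And>w' u. w' \<le> v \<Longrightarrow> u \<in> U w' \<Longrightarrow> le w' (res v w' x) u"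
                  using xL vd by (auto simp: lowb_def)
                have "res w v u \<in> U v" using UU1 vw wd u by blast
                hence "le v x (res w v u)" using xl[of v] ps_id[OF P xF] by simp
                thus "x \<in> resD w w (down F res le w u) v" using xF vw by (simp add: resD_def down_def)
              qed
            qed
            hence "le w (\<alpha> w (resD d w ?L)) (res w w u)" using A[OF RL uF] by blast
            hence a1: "le w (res d w (\<alpha> d ?L)) u" using MN[OF wd L] ps_id[OF P uF] by simp
            have a2: "le w (res d w (res d' d y)) (res d w (\<alpha> d ?L))"
              using ps_mono[OF P wd zF aF z] .
            have a3: "le w (res d' w y) u"
              using ps_trans[OF P ps_res[OF P wd zF] ps_res[OF P wd aF] uF a2 a1]
                ps_comp[OF P wd dd y] by simp
            show "u \<in> resD d' d (down F res (opp le) d' y) w"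
              using a3 uF wd dd by (auto simp: resD_def down_def opp_def intro: order_trans)
          qed
        qed
      qed
    next
      assume H: "U \<le> resD d' d (down F res (opp le) d' y)"
      have "res d' d y \<in> ?L d"
      proof -
        have "le w' (res d w' (res d' d y)) u" if w': "w' \<le> d" and u: "u \<in> U w'" for w' u
        proof -
          have "u \<in> resD d' d (down F res (opp le) d' y) w'" using H u unfolding le_fun_def by blast
          hence "le w' (res d' w' y) u" using w' dd by (auto simp: resD_def down_def opp_def intro: order_trans split: if_splits)
          thus ?thesis using ps_comp[OF P w' dd y] by simp
        qed
        thus ?thesis using zF by (simp add: lowb_def)
      qed
      thus "le d (res d' d y) (\<alpha> d ?L)" using UB[OF L] by blast
    qed
    thus ?thesis using dd unfolding \<beta>_def opp_def by simp
  qed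
  show ?thesis unfolding complete_def
    apply (rule exI[of _ \<beta>])
    apply (rule conjI[OF Mop])
    apply (intro allI impI)
    apply (erule (1) Aop)
    done
qed

theorem corollary3p1:
  fixes F :: "'u::complete_lattice \<Rightarrow> 'x set"
    and res :: "'u \<Rightarrow> 'u \<Rightarrow> 'x \<Rightarrow> 'x"
    and le :: "'u \<Rightarrow> 'x \<Rightarrow> 'x \<Rightarrow> bool"
  assumes "frame TYPE('u)"
    and "posheaf F res le"
  shows "complete F res le \<longleftrightarrow> complete F res (opp le)"
proof
  assume "complete F res le" thus "complete F res (opp le)" by (rule main[OF assms])
next
  assume "complete F res (opp le)"
  hence "complete F res (opp (opp le))" by (rule main[OF assms(1) posheaf_opp[OF assms(2)]])
  thus "complete F res le" by (simp add: opp_opp)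
qed

end
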